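(* Let $q$ be a power of an odd prime, $d\ge 2$, $r\in\mathbb F_q^*$. Define on $\mathbb F_q^{2d}$ the varieties $V_{\mathcal Q_r}=\{(x,x')\in\mathbb F_q^{2d}: \|x\|_Q-r\|x'\|_Q=0\}$ and $V_{\mathcal Q_r^*}=\{(m,m')\in\mathbb F_q^{2d}: \|m\|_{Q^*}-r^{-1}\|m'\|_{Q^*}=0\}$. Then for every $M\in\mathbb F_q^{2d}$: (i) if $d$ is even, $\widehat{V_{\mathcal Q_r}}(M)=\frac{\delta_0(M)}{q}+\frac{V_{\mathcal Q_r^*}(M)}{q^d}-\frac{1}{q^{d+1}}$; (ii) if $d$ is odd, $\widehat{V_{\mathcal Q_r}}(M)=\frac{\delta_0(M)}{q}+\frac{\eta(r)V_{\mathcal Q_r^*}(M)}{q^d}-\frac{\eta(r)}{q^{d+1}}$.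
   Context: $\eta$ is the quadratic character of $\mathbb F_q^*$ ($\eta(t)=1$ if $t$ is a nonzero square, $-1$ otherwise). Fix a symmetric $d\times d$ matrix $A$ over $\mathbb F_q$ with $\det A\ne0$. If $d$ is even: $\|x\|_Q=x_1^2-x_2^2+\dots+x_{d-1}^2-\varepsilon x_d^2$ and $\|m\|_{Q^*}=m_1^2-m_2^2+\dots+m_{d-1}^2-\varepsilon^{-1}m_d^2$, with $\varepsilon\in\mathbb F_q^*$ such that $\eta((-1)^{d/2}\varepsilon)=\eta(\det A)$. If $d$ is odd: $\|x\|_Q=x_1^2-x_2^2+\dots+x_{d-2}^2-x_{d-1}^2+\varepsilon x_d^2$ and $\|m\|_{Q^*}=m_1^2-m_2^2+\dots+m_{d-2}^2-m_{d-1}^2+\varepsilon^{-1}m_d^2$, with $\eta((-1)^{(d-1)/2}\varepsilon)=\eta(\det A)$. $\chi$ is the canonical additive character of $\mathbb F_q$ ($\chi(c)=e^{2\pi i\,\mathrm{Tr}(c)/p}$), the Fourier transform on $\mathbb F_q^{n}$ is $\widehat f(M)=q^{-n}\sum_X\chi(-M\cdot X)f(X)$, sets are identified with their indicator functions, and $\delta_0$ is the indicator of the origin. *)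

theory Defs
  imports Complex_Main "HOL-Library.Cardinality" "Jordan_Normal_Form.Determinant"
begin

definition fq_deg :: "'a::{finite,field} itself \<Rightarrow> nat" where
  "fq_deg (t :: 'a itself) = (LEAST n. CARD('a) = CHAR('a) ^ n)"

definition fq_trace :: "'a::{finite,field} \<Rightarrow> 'a" where
  "fq_trace c = (\<Sum>j<fq_deg TYPE('a). c ^ (CHAR('a) ^ j))"

(* the trace value, lying in the prime field, as an integer in {0..p-1} *)
definition fq_trace_nat :: "'a::{finite,field} \<Rightarrow> nat" where
  "fq_trace_nat c = (THE k. k < CHAR('a) \<and> of_nat k = fq_trace c)"

definition can_chi :: "'a::{finite,field} \<Rightarrow> complex" where
  "can_chi c = cis (2 * pi * real (fq_trace_nat c) / real CHAR('a))"

(* quadratic character (eta 0 = 0; only used on nonzero arguments) *)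
definition qchar :: "'a::{finite,field} \<Rightarrow> int" where
  "qchar t = (if t = 0 then 0 else if (\<exists>y. y ^ 2 = t) then 1 else -1)"

(* F_q^n, as functions nat \<Rightarrow> 'a vanishing outside {0..<n} *)
definition fvecs :: "nat \<Rightarrow> (nat \<Rightarrow> 'a::{finite,field}) set" where
  "fvecs n = {x. \<forall>i\<ge>n. x i = 0}"

definition fdot :: "nat \<Rightarrow> (nat \<Rightarrow> 'a::{finite,field}) \<Rightarrow> (nat \<Rightarrow> 'a) \<Rightarrow> 'a" where
  "fdot n m x = (\<Sum>i<n. m i * x i)"

definition ffourier :: "nat \<Rightarrow> ((nat \<Rightarrow> 'a::{finite,field}) \<Rightarrow> complex) \<Rightarrow> (nat \<Rightarrow> 'a) \<Rightarrow> complex" where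
  "ffourier n f M = (1 / of_nat CARD('a) ^ n) *
     (\<Sum>X\<in>fvecs n. can_chi (- fdot n M X) * f X)"

(* the form ||x||_Q on F_q^d (0-indexed coordinates x 0, ..., x (d-1)):
   d even: x_1^2 - x_2^2 + ... + x_{d-1}^2 - e x_d^2
   d odd : x_1^2 - x_2^2 + ... + x_{d-2}^2 - x_{d-1}^2 + e x_d^2
   The dual form ||m||_{Q*} is qform d (inverse e) m. *)
definition qform :: "nat \<Rightarrow> 'a::{finite,field} \<Rightarrow> (nat \<Rightarrow> 'a) \<Rightarrow> 'a" where
  "qform d e x = (\<Sum>i<d - 1. (-1) ^ i * x i ^ 2)
                 + (if even d then - e else e) * x (d - 1) ^ 2"

(* a point X of F_q^(2d) is X = (x, x') with x i = X i, x' i = X (d + i) for i < d *)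
definition fst_half :: "nat \<Rightarrow> (nat \<Rightarrow> 'a::zero) \<Rightarrow> (nat \<Rightarrow> 'a)" where
  "fst_half d X = (\<lambda>i. if i < d then X i else 0)"
definition snd_half :: "nat \<Rightarrow> (nat \<Rightarrow> 'a::zero) \<Rightarrow> (nat \<Rightarrow> 'a)" where
  "snd_half d X = (\<lambda>i. if i < d then X (d + i) else 0)"

definition VQ :: "nat \<Rightarrow> 'a::{finite,field} \<Rightarrow> 'a \<Rightarrow> (nat \<Rightarrow> 'a) set" where
  "VQ d e r = {X \<in> fvecs (2 * d).
      qform d e (fst_half d X) - r * qform d e (snd_half d X) = 0}"

definition VQdual :: "nat \<Rightarrow> 'a::{finite,field} \<Rightarrow> 'a \<Rightarrow> (nat \<Rightarrow> 'a) set" where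
  "VQdual d e r = {M \<in> fvecs (2 * d).
      qform d (inverse e) (fst_half d M) - inverse r * qform d (inverse e) (snd_half d M) = 0}"

definition ind :: "'b set \<Rightarrow> 'b \<Rightarrow> complex" where
  "ind S x = (if x \<in> S then 1 else 0)"

end

theory Submission
  imports Defs "HOL-Computational_Algebra.Polynomial" "HOL-Computational_Algebra.Primes"
begin


lemma ff_CHAR_pos: "CHAR('a::{finite,field}) > 0"
  by (rule finite_imp_CHAR_pos) simp

lemma ff_CHAR_prime: "prime CHAR('a::{finite,field})"
  using ff_CHAR_pos prime_CHAR_semidom by blast

lemma ff_of_nat_mod: "(of_nat (x mod CHAR('a)) :: 'a::{finite,field}) = of_nat x"
proof -
  have "x = x mod CHAR('a) + CHAR('a) * (x div CHAR('a))" by simp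
  then have "(of_nat x :: 'a) = of_nat (x mod CHAR('a)) + of_nat CHAR('a) * of_nat (x div CHAR('a))"
    by (metis of_nat_add of_nat_mult)
  then show ?thesis by simp
qed

lemma ff_of_nat_eq_iff: "(of_nat x :: 'a::{finite,field}) = of_nat y \<longleftrightarrow> x mod CHAR('a) = y mod CHAR('a)"
proof
  assume "x mod CHAR('a) = y mod CHAR('a)"
  then show "(of_nat x :: 'a) = of_nat y" by (metis ff_of_nat_mod)
next
  assume h: "(of_nat x :: 'a) = of_nat y"
  show "x mod CHAR('a) = y mod CHAR('a)"
  proof (cases "x \<le> y")
    case True
    then have "(of_nat (y - x) :: 'a) = 0" using h by (simp add: of_nat_diff)
    then have "CHAR('a) dvd (y - x)" by (simp add: of_nat_eq_0_iff_char_dvd)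
    then show ?thesis using True by (metis mod_eq_dvd_iff_nat)
  next
    case False
    then have "(of_nat (x - y) :: 'a) = 0" using h by (simp add: of_nat_diff)
    then have "CHAR('a) dvd (x - y)" by (simp add: of_nat_eq_0_iff_char_dvd)
    then show ?thesis using False by (metis mod_eq_dvd_iff_nat nat_le_linear)
  qed
qed

lemma ff_card_ge2: "CARD('a::{finite,field}) \<ge> 2"
proof -
  have "card {0, 1::'a} \<le> CARD('a)" by (rule card_mono) auto
  then show ?thesis by simp
qed

lemma ff_power_card_minus1:
  fixes x :: "'a::{finite,field}"
  assumes "x \<noteq> 0"
  shows "x ^ (CARD('a) - 1) = 1"
proof -
  have "(\<Prod>y\<in>UNIV-{0}. x * y) = x ^ card (UNIV - {0::'a}) * \<Prod>(UNIV-{0::'a})"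
    by (simp add: prod.distrib)
  also have "card (UNIV - {0::'a}) = CARD('a) - 1"
    by (simp add: card_Diff_subset)
  also have "(\<Prod>y\<in>UNIV-{0}. x * y) = (\<Prod>y\<in>UNIV-{0}. y)"
    by (rule prod.reindex_bij_witness[of _ "\<lambda>y. y / x" "\<lambda>y. x * y"]) (use assms in auto)
  finally have "\<Prod>(UNIV-{0::'a}) * 1 = x ^ (CARD('a) - 1) * \<Prod>(UNIV-{0::'a})" by simp
  moreover have "\<Prod>(UNIV-{0::'a}) \<noteq> 0" by (simp add: prod_zero_iff)
  ultimately show ?thesis by simp
qed

lemma ff_power_card:
  fixes x :: "'a::{finite,field}"
  shows "x ^ CARD('a) = x"
proof (cases "x = 0")
  case True then show ?thesis using ff_card_ge2[where 'a='a] by simp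
next
  case False
  have "x ^ CARD('a) = x ^ (CARD('a) - 1) * x"
  proof -
    have "CARD('a) = Suc (CARD('a) - 1)" using ff_card_ge2[where 'a='a] by simp
    then show ?thesis by (metis power_Suc2)
  qed
  then show ?thesis using ff_power_card_minus1[OF False] by simp
qed

definition good_sub :: "'a::{finite,field} set \<Rightarrow> bool" where
  "good_sub W \<longleftrightarrow> 0 \<in> W \<and> (\<forall>x\<in>W. \<forall>y\<in>W. x + y \<in> W) \<and> (\<forall>x\<in>W. \<forall>k. of_nat k * x \<in> W)"

lemma good_sub_extend:
  fixes W :: "'a::{finite,field} set"
  assumes g: "good_sub W" and v: "v \<notin> W"
  defines "W' \<equiv> (\<lambda>(w, j). w + of_nat j * v) ` (W \<times> {..<CHAR('a)})"
  shows "good_sub W' \<and> card W' = CHAR('a) * card W"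
proof -
  let ?p = "CHAR('a)"
  have p0: "?p > 0" by (rule ff_CHAR_pos)
  have pp: "prime ?p" by (rule ff_CHAR_prime)
  have neg: "- x \<in> W" if "x \<in> W" for x
  proof -
    have "(of_nat (?p - 1) :: 'a) = - 1"
      using p0 by (simp add: of_nat_diff)
    then show ?thesis using g that unfolding good_sub_def by (metis mult_minus1)
  qed
  have inj: "inj_on (\<lambda>(w, j). w + of_nat j * v) (W \<times> {..<?p})"
  proof (rule inj_onI, clarify)
    fix w j w' j'
    assume w: "w \<in> W" "j < ?p" "w' \<in> W" "j' < ?p" and eq: "w + of_nat j * v = w' + of_nat j' * v"
    have main: "j = j'" if jj: "j' < j" "j < ?p" "w \<in> W" "w' \<in> W" and eq: "w + of_nat j * v = w' + of_nat j' * v"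
      for w j w' j'
    proof -
      have "of_nat (j - j') * v = w' + - w"
        using eq jj by (simp add: of_nat_diff algebra_simps)
      also have "\<dots> \<in> W" using g jj neg unfolding good_sub_def by blast
      finally have inW: "of_nat (j - j') * v \<in> W" .
      have "\<not> ?p dvd (j - j')" using jj by (simp add: nat_dvd_not_less)
      then have c0: "(of_nat (j - j') :: 'a) \<noteq> 0" by (simp add: of_nat_eq_0_iff_char_dvd)
      have "(of_nat (j - j') :: 'a) ^ (CARD('a) - 1) = 1"
        using ff_power_card_minus1[OF c0] .
      then have "(of_nat ((j - j') ^ (CARD('a) - 2)) :: 'a) * of_nat (j - j') = 1"
      proof -
        have "CARD('a) - 1 = Suc (CARD('a) - 2)" using ff_card_ge2[where 'a='a] by simp
        then show ?thesis using \<open>(of_nat (j - j') :: 'a) ^ (CARD('a) - 1) = 1\<close>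
          by (simp add: of_nat_power power_Suc2 del: power_Suc)
      qed
      then have "v = of_nat ((j - j') ^ (CARD('a) - 2)) * (of_nat (j - j') * v)"
        by (metis mult.assoc mult_1)
      also have "\<dots> \<in> W" using inW g unfolding good_sub_def by blast
      finally show ?thesis using v by simp
    qed
    have "j = j'"
    proof (cases j j' rule: linorder_cases)
      case less then show ?thesis using main[OF less w(4) w(3) w(1) eq[symmetric]] by simp
    next
      case equal then show ?thesis .
    next
      case greater then show ?thesis using main[OF greater w(2) w(1) w(3) eq] by simp
    qed
    then show "w = w' \<and> j = j'" using eq by simp
  qed
  have card: "card W' = ?p * card W"
    unfolding W'_def using inj by (simp add: card_image card_cartesian_product)
  have modp: "(of_nat k :: 'a) = of_nat (k mod ?p)" for k by (simp add: ff_of_nat_mod)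
  have "good_sub W'"
    unfolding good_sub_def
  proof (intro conjI ballI allI)
    show "0 \<in> W'" unfolding W'_def
      by (rule image_eqI[of _ _ "(0,0)"]) (use g p0 in \<open>auto simp: good_sub_def\<close>)
  next
    fix x y assume "x \<in> W'" "y \<in> W'"
    then obtain w j w' j' where xy: "x = w + of_nat j * v" "y = w' + of_nat j' * v" "w \<in> W" "w' \<in> W"
      unfolding W'_def by auto
    have "x + y = (w + w') + of_nat ((j + j') mod ?p) * v"
      using xy by (simp only: ff_of_nat_mod) (simp add: algebra_simps)
    moreover have "w + w' \<in> W" using g xy unfolding good_sub_def by blast
    ultimately show "x + y \<in> W'" unfolding W'_def using p0
      by (auto intro!: image_eqI[of _ _ "(w + w', (j + j') mod ?p)"])
  next
    fix x k assume "x \<in> W'"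
    then obtain w j where xy: "x = w + of_nat j * v" "w \<in> W"
      unfolding W'_def by auto
    have "of_nat k * x = of_nat k * w + of_nat ((k * j) mod ?p) * v"
      using xy by (simp only: ff_of_nat_mod) (simp add: algebra_simps)
    moreover have "of_nat k * w \<in> W" using g xy unfolding good_sub_def by blast
    ultimately show "of_nat k * x \<in> W'" unfolding W'_def using p0
      by (auto intro!: image_eqI[of _ _ "(of_nat k * w, (k * j) mod ?p)"])
  qed
  then show ?thesis using card by simp
qed

lemma ff_card_power: "\<exists>n. CARD('a::{finite,field}) = CHAR('a) ^ n"
proof -
  let ?p = "CHAR('a)"
  have p2: "?p \<ge> 2" using ff_CHAR_prime prime_ge_2_nat by blast
  define K where "K = {k. \<exists>W::'a set. good_sub W \<and> card W = ?p ^ k}"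
  have "good_sub ({0}::'a set)" unfolding good_sub_def by simp
  then have K0: "0 \<in> K" unfolding K_def by (auto intro!: exI[of _ "{0}"])
  have Kb: "k < CARD('a)" if kK: "k \<in> K" for k
  proof -
    obtain W :: "'a set" where "card W = ?p ^ k" using kK unfolding K_def mem_Collect_eq by blast
    moreover have "card W \<le> CARD('a)" by (simp add: card_mono)
    moreover have "k < ?p ^ k"
    proof -
      have "k < 2 ^ k" by (rule less_exp)
      also have "(2::nat) ^ k \<le> ?p ^ k" using p2 by (rule power_mono) simp
      finally show ?thesis .
    qed
    ultimately show ?thesis by linarith
  qed
  have fK: "finite K" using Kb by (meson finite_nat_set_iff_bounded)
  define k where "k = Max K"
  have "k \<in> K" unfolding k_def using fK K0 by (auto intro: Max_in)
  then obtain W :: "'a set" where W: "good_sub W" "card W = ?p ^ k" unfolding K_def by auto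
  have "W = UNIV"
  proof (rule ccontr)
    assume "W \<noteq> UNIV"
    then obtain v where "v \<notin> W" by auto
    from good_sub_extend[OF W(1) this] obtain W' :: "'a set" where "good_sub W'" "card W' = ?p ^ Suc k"
      using W(2) by auto
    then have "Suc k \<in> K" unfolding K_def by auto
    then have "Suc k \<le> k" unfolding k_def using fK by (simp add: Max_ge)
    then show False by simp
  qed
  then show ?thesis using W by auto
qed


lemma fq_deg_prop: "CARD('a::{finite,field}) = CHAR('a) ^ fq_deg TYPE('a)"
  unfolding fq_deg_def using ff_card_power[where 'a='a] by (rule LeastI_ex)

lemma fq_deg_pos: "fq_deg TYPE('a::{finite,field}) > 0"
proof (rule ccontr)
  assume "\<not> fq_deg TYPE('a) > 0"
  then have "CARD('a) = 1" using fq_deg_prop[where 'a='a] by simp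
  then show False using ff_card_ge2[where 'a='a] by simp
qed

lemma ff_CHAR_ge2: "CHAR('a::{finite,field}) \<ge> 2"
  using ff_CHAR_prime prime_ge_2_nat by blast

lemma fq_trace_add: "fq_trace (a + b :: 'a::{finite,field}) = fq_trace a + fq_trace b"
  unfolding fq_trace_def
  by (simp add: freshmans_dream'[OF ff_CHAR_prime refl] sum.distrib)

lemma fq_trace_pow: "fq_trace (c :: 'a::{finite,field}) ^ CHAR('a) = fq_trace c"
proof -
  let ?p = "CHAR('a)" and ?n = "fq_deg TYPE('a)"
  define f where "f j = c ^ (?p ^ j)" for j
  have "fq_trace c ^ ?p = (\<Sum>j<?n. f j ^ ?p)"
    unfolding fq_trace_def f_def by (rule freshmans_dream_sum[OF ff_CHAR_prime refl])
  also have "\<dots> = (\<Sum>j<?n. f (Suc j))"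
    unfolding f_def by (simp add: power_mult[symmetric] mult.commute)
  also have "\<dots> = (\<Sum>j<?n. f j)"
  proof -
    have "f ?n = f 0" unfolding f_def using ff_power_card[of c] fq_deg_prop[where 'a='a] by simp
    moreover have "(\<Sum>j<Suc ?n. f j) = f 0 + (\<Sum>j<?n. f (Suc j))" by (rule sum.lessThan_Suc_shift)
    moreover have "(\<Sum>j<Suc ?n. f j) = (\<Sum>j<?n. f j) + f ?n" by simp
    ultimately show ?thesis by (simp add: add.commute)
  qed
  finally show ?thesis unfolding fq_trace_def f_def .
qed

lemma ff_of_nat_pow_char: "(of_nat k :: 'a::{finite,field}) ^ CHAR('a) = of_nat k"
proof (induction k)
  case 0 then show ?case using ff_CHAR_pos[where 'a='a] by simp
next
  case (Suc k)
  have "(of_nat (Suc k) :: 'a) ^ CHAR('a) = (of_nat k + 1) ^ CHAR('a)" by (simp only: of_nat_Suc add.commute)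
  also have "\<dots> = of_nat k ^ CHAR('a) + 1 ^ CHAR('a)"
    by (rule freshmans_dream[OF ff_CHAR_prime refl])
  finally show ?case using Suc by simp
qed

lemma ff_fixed_pts: "{y :: 'a::{finite,field}. y ^ CHAR('a) = y} = of_nat ` {..<CHAR('a)}"
proof -
  let ?p = "CHAR('a)"
  define P :: "'a poly" where "P = monom 1 ?p - [:0, 1:]"
  have p2: "?p \<ge> 2" by (rule ff_CHAR_ge2)
  have poly: "poly P y = y ^ ?p - y" for y unfolding P_def by (simp add: poly_monom)
  obtain m where pm: "?p = Suc (Suc m)" using p2 by (metis add_2_eq_Suc le_Suc_ex)
  have cP: "coeff P ?p = 1" unfolding P_def pm by simp
  have P0: "P \<noteq> 0" using cP by auto
  have dP: "degree P \<le> ?p" unfolding P_def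
    using p2 by (intro degree_diff_le) (auto simp: degree_monom_le intro: order_trans[OF degree_pCons_le])
  have "card {y. poly P y = 0} \<le> ?p" using card_poly_roots_bound[OF P0] dP by linarith
  moreover have R: "{y. poly P y = 0} = {y :: 'a. y ^ ?p = y}" using poly by auto
  ultimately have c1: "card {y :: 'a. y ^ ?p = y} \<le> ?p" by simp
  have sub: "of_nat ` {..<?p} \<subseteq> {y :: 'a. y ^ ?p = y}" using ff_of_nat_pow_char by auto
  have inj: "inj_on (of_nat :: nat \<Rightarrow> 'a) {..<?p}"
    by (rule inj_onI) (simp add: ff_of_nat_eq_iff)
  have c2: "card (of_nat ` {..<?p} :: 'a set) = ?p" using card_image[OF inj] by simp
  show ?thesis
    using card_subset_eq[OF _ sub] c1 c2 sub card_mono[OF _ sub] by (metis finite le_antisym)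
qed

lemma fq_trace_nat_prop:
  "fq_trace_nat (c::'a::{finite,field}) < CHAR('a) \<and> of_nat (fq_trace_nat c) = fq_trace c"
proof -
  have "fq_trace c \<in> of_nat ` {..<CHAR('a)}"
    using ff_fixed_pts[where 'a='a] fq_trace_pow[of c] by blast
  then obtain k where k: "k < CHAR('a)" "of_nat k = fq_trace c" by auto
  have uniq: "k' = k" if "k' < CHAR('a) \<and> of_nat k' = fq_trace c" for k'
    using that k ff_of_nat_eq_iff[where 'a='a, of k' k] by simp
  have "\<exists>!k. k < CHAR('a) \<and> of_nat k = fq_trace c" using k uniq by blast
  then show ?thesis unfolding fq_trace_nat_def by (rule theI')
qed

lemma can_chi_add: "can_chi (a + b :: 'a::{finite,field}) = can_chi a * can_chi b"
proof -
  let ?p = "CHAR('a)"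
  define ka kb kab where "ka = fq_trace_nat a" "kb = fq_trace_nat b" "kab = fq_trace_nat (a + b)"
  have P: "ka < ?p" "kb < ?p" "kab < ?p" "(of_nat ka :: 'a) = fq_trace a" "(of_nat kb :: 'a) = fq_trace b"
    "(of_nat kab :: 'a) = fq_trace (a + b)"
    using fq_trace_nat_prop unfolding ka_kb_kab_def by auto
  have "(of_nat kab :: 'a) = of_nat (ka + kb)" using P fq_trace_add[of a b] by simp
  then have "kab mod ?p = (ka + kb) mod ?p" by (simp only: ff_of_nat_eq_iff)
  then have e: "kab = (ka + kb) mod ?p" using P by simp
  have p0: "real ?p > 0" using ff_CHAR_pos[where 'a='a] by simp
  have "ka + kb = kab + ?p * ((ka + kb) div ?p)" using e by simp
  then have "real ka + real kb = real kab + real ?p * real ((ka + kb) div ?p)"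
    by (metis of_nat_add of_nat_mult)
  then have "2 * pi * real ka / real ?p + 2 * pi * real kb / real ?p
      = 2 * pi * real kab / real ?p + 2 * pi * real ((ka + kb) div ?p)"
  proof -
    assume eq: "real ka + real kb = real kab + real ?p * real ((ka + kb) div ?p)"
    have "2 * pi * real ka / real ?p + 2 * pi * real kb / real ?p = 2 * pi * (real ka + real kb) / real ?p"
      by (simp add: add_divide_distrib distrib_left)
    also have "\<dots> = 2 * pi * (real kab + real ?p * real ((ka + kb) div ?p)) / real ?p" using eq by simp
    also have "\<dots> = 2 * pi * real kab / real ?p + 2 * pi * real ((ka + kb) div ?p)"
      using p0 by (simp add: field_simps)
    finally show ?thesis .
  qed
  note eqn = this
  have "can_chi a * can_chi b = cis (2 * pi * real ka / real ?p + 2 * pi * real kb / real ?p)"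
    unfolding can_chi_def ka_kb_kab_def by (rule cis_mult)
  also have "\<dots> = cis (2 * pi * real kab / real ?p + 2 * pi * real ((ka + kb) div ?p))"
    by (simp only: eqn)
  also have "\<dots> = cis (2 * pi * real kab / real ?p) * cis (2 * pi * real ((ka + kb) div ?p))"
    by (rule cis_mult[symmetric])
  also have "cis (2 * pi * real ((ka + kb) div ?p)) = 1"
    by (rule cis_multiple_2pi) (simp add: Ints_of_nat)
  finally show ?thesis unfolding can_chi_def ka_kb_kab_def by simp
qed

lemma can_chi_0: "can_chi (0::'a::{finite,field}) = 1"
proof -
  have "can_chi (0::'a) = can_chi (0::'a) * can_chi (0::'a)" using can_chi_add[of "0::'a" 0] by (simp only: add_0)
  moreover have "can_chi (0::'a) \<noteq> 0" unfolding can_chi_def by simp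
  ultimately show ?thesis by (metis mult_cancel_left2)
qed

lemma can_chi_neg: "can_chi (- a :: 'a::{finite,field}) * can_chi a = 1"
proof -
  have "can_chi (-a) * can_chi a = can_chi (-a + a)" by (simp only: can_chi_add)
  then show ?thesis by (simp add: can_chi_0)
qed

lemma can_chi_sum: "can_chi (\<Sum>i\<in>A. f i :: 'a::{finite,field}) = (\<Prod>i\<in>A. can_chi (f i))"
  by (induction A rule: infinite_finite_induct) (auto simp: can_chi_0 can_chi_add)

lemma can_chi_nontriv: "\<exists>c::'a::{finite,field}. can_chi c \<noteq> 1"
proof -
  let ?p = "CHAR('a)" and ?n = "fq_deg TYPE('a)"
  define T :: "'a poly" where "T = (\<Sum>j<?n. monom 1 (?p ^ j))"
  have n0: "?n > 0" by (rule fq_deg_pos)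
  have p2: "?p \<ge> 2" by (rule ff_CHAR_ge2)
  have polyT: "poly T c = fq_trace c" for c
    unfolding T_def fq_trace_def by (simp add: poly_sum poly_monom)
  have "coeff T (?p ^ (?n - 1)) = (\<Sum>j<?n. if ?p ^ j = ?p ^ (?n - 1) then 1 else 0)"
    unfolding T_def by (simp add: coeff_sum)
  also have "\<dots> = (\<Sum>j\<in>{?n - 1}. 1)"
  proof -
    have "?p ^ j = ?p ^ (?n - 1) \<longleftrightarrow> j = ?n - 1" for j
      using p2 by (simp add: power_inject_exp)
    then have "(\<Sum>j<?n. if ?p ^ j = ?p ^ (?n - 1) then 1 else 0) = (\<Sum>j<?n. if j = ?n - 1 then (1::'a) else 0)"
      by simp
    also have "\<dots> = (\<Sum>j\<in>{?n - 1}. 1)" using n0 by (simp add: sum.delta)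
    finally show ?thesis .
  qed
  finally have "coeff T (?p ^ (?n - 1)) = 1" by simp
  then have T0: "T \<noteq> 0" by auto
  have dT: "degree T \<le> ?p ^ (?n - 1)" unfolding T_def
  proof (rule degree_sum_le)
    fix j assume "j \<in> {..<?n}"
    then have "?p ^ j \<le> ?p ^ (?n - 1)" using p2 by (intro power_increasing) auto
    then show "degree (monom (1::'a) (?p ^ j)) \<le> ?p ^ (?n - 1)"
      by (rule order_trans[OF degree_monom_le])
  qed simp
  have "?p ^ (?n - 1) < ?p ^ ?n" using p2 n0 by (simp add: power_strict_increasing)
  then have "card {c. poly T c = 0} < CARD('a)"
    using card_poly_roots_bound[OF T0] dT fq_deg_prop[where 'a='a] by linarith
  then have "{c. poly T c = 0} \<noteq> UNIV" by auto
  then obtain c where "poly T c \<noteq> 0" by auto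
  then have c: "fq_trace c \<noteq> 0" using polyT by simp
  define k where "k = fq_trace_nat c"
  have k: "k < ?p" "of_nat k = fq_trace c" using fq_trace_nat_prop unfolding k_def by auto
  then have "k \<noteq> 0" using c by (metis of_nat_0)
  have "can_chi c \<noteq> 1"
  proof
    assume "can_chi c = 1"
    then have "cos (2 * pi * real k / real ?p) = 1"
      unfolding can_chi_def k_def by (metis Re_complex_of_real cis.sel(1) one_complex.sel(1))
    then obtain m :: int where m: "2 * pi * real k / real ?p = of_int m * 2 * pi" using cos_one_2pi_int by blast
    have p0: "real ?p > 0" using p2 by simp
    have "real k = m * real ?p" using m p0 by (simp add: field_simps)
    then have "real_of_int (int k) = real_of_int (m * int ?p)" by simp
    then have "int k = m * int ?p" by (rule of_int_eq_iff[THEN iffD1])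
    show False
    proof (cases "m \<le> 0")
      case True
      then have "m * int ?p \<le> 0" by (simp add: mult_nonpos_nonneg)
      then show False using \<open>int k = m * int ?p\<close> \<open>k \<noteq> 0\<close> by simp
    next
      case False
      then have "m * int ?p \<ge> 1 * int ?p" by (intro mult_right_mono) auto
      then have "int ?p \<le> int k" using \<open>int k = m * int ?p\<close> by linarith
      then show False using k(1) by linarith
    qed
  qed
  then show ?thesis by blast
qed

lemma sum_can_chi: "(\<Sum>x::'a::{finite,field}\<in>UNIV. can_chi x) = 0"
proof -
  obtain c :: 'a where c: "can_chi c \<noteq> 1" using can_chi_nontriv by blast
  have "(\<Sum>x::'a\<in>UNIV. can_chi x) = (\<Sum>x\<in>UNIV. can_chi (x + c))"
    by (rule sum.reindex_bij_witness[where i="\<lambda>x. x + c" and j="\<lambda>x. x - c"]) auto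
  also have "\<dots> = can_chi c * (\<Sum>x::'a\<in>UNIV. can_chi x)"
    by (simp add: can_chi_add sum_distrib_left mult.commute)
  finally have "(1 - can_chi c) * (\<Sum>x::'a\<in>UNIV. can_chi x) = 0" by (simp add: algebra_simps)
  then show ?thesis using c by simp
qed

lemma sum_can_chi_mult: "(\<Sum>x::'a::{finite,field}\<in>UNIV. can_chi (b * x)) = (if b = 0 then of_nat CARD('a) else 0)"
proof (cases "b = 0")
  case True then show ?thesis by (simp add: can_chi_0)
next
  case False
  have "(\<Sum>x\<in>UNIV. can_chi (b * x)) = (\<Sum>x::'a\<in>UNIV. can_chi x)"
    by (rule sum.reindex_bij_witness[where j="\<lambda>x. b * x" and i="\<lambda>x. x / b"]) (use False in auto)
  then show ?thesis using False sum_can_chi by simp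
qed


lemma ff_two_nz:
  assumes "odd CARD('a::{finite,field})"
  shows "(2::'a) \<noteq> 0"
proof
  assume "(2::'a) = 0"
  then have "(of_nat 2 :: 'a) = 0" by simp
  then have "CHAR('a) dvd 2" by (simp only: of_nat_eq_0_iff_char_dvd)
  then have "CHAR('a) \<le> 2" by (simp add: dvd_imp_le)
  then have "CHAR('a) = 2" using ff_CHAR_ge2[where 'a='a] by simp
  then have "even CARD('a)" using fq_deg_prop[where 'a='a] fq_deg_pos[where 'a='a] by simp
  then show False using assms by simp
qed

lemma sq_card:
  assumes two: "(2::'a::{finite,field}) \<noteq> 0"
  shows "int (card {y::'a. y ^ 2 = t}) = 1 + qchar t"
proof (cases "t = 0")
  case True
  then have "{y::'a. y ^ 2 = t} = {0}" by auto
  then show ?thesis using True by (simp add: qchar_def)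
next
  case False
  show ?thesis
  proof (cases "\<exists>y. y ^ 2 = t")
    case True
    then obtain y0 where y0: "y0 ^ 2 = t" by blast
    then have "y0 \<noteq> 0" using False by auto
    have ne: "y0 \<noteq> - y0"
    proof
      assume "y0 = - y0"
      then have "y0 + y0 = 0" by (simp only: eq_neg_iff_add_eq_0)
      then have "2 * y0 = 0" by (simp only: mult_2)
      then show False using two \<open>y0 \<noteq> 0\<close> by simp
    qed
    have "{y::'a. y ^ 2 = t} = {y0, - y0}" using y0 by (auto simp: power2_eq_iff)
    then show ?thesis using ne True False by (simp add: qchar_def)
  next
    case nosq: False
    then have "{y::'a. y ^ 2 = t} = {}" by auto
    then show ?thesis using nosq False by (simp add: qchar_def)
  qed
qed

lemma sum_sq_card: "(\<Sum>t\<in>UNIV. card {y::'a::{finite,field}. y ^ 2 = t}) = CARD('a)"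
proof -
  have "(\<Sum>t\<in>UNIV. \<Sum>y\<in>{y::'a. y \<in> UNIV \<and> y ^ 2 = t}. (1::nat)) = (\<Sum>y\<in>(UNIV::'a set). 1)"
    by (rule sum.group) auto
  then show ?thesis by simp
qed

lemma sum_qchar:
  assumes two: "(2::'a::{finite,field}) \<noteq> 0"
  shows "(\<Sum>t\<in>(UNIV::'a set). qchar t) = 0"
proof -
  have "(\<Sum>t\<in>(UNIV::'a set). 1 + qchar t) = (\<Sum>t\<in>UNIV. int (card {y::'a. y ^ 2 = t}))"
    using sq_card[OF two] by simp
  also have "\<dots> = int CARD('a)" using sum_sq_card[where 'a='a] by (metis of_nat_sum)
  finally show ?thesis by (simp add: sum.distrib)
qed

lemma qchar_sq: "y \<noteq> 0 \<Longrightarrow> qchar (y ^ 2 * b) = qchar b"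
proof -
  assume y: "y \<noteq> 0"
  have "(\<exists>z. z ^ 2 = y ^ 2 * b) \<longleftrightarrow> (\<exists>z. z ^ 2 = b)"
  proof
    assume "\<exists>z. z ^ 2 = y ^ 2 * b"
    then obtain z where "z ^ 2 = y ^ 2 * b" by blast
    then have "(z / y) ^ 2 = b" using y by (simp add: power_divide)
    then show "\<exists>z. z ^ 2 = b" by blast
  next
    assume "\<exists>z. z ^ 2 = b"
    then obtain z where "z ^ 2 = b" by blast
    then have "(y * z) ^ 2 = y ^ 2 * b" by (simp add: power_mult_distrib)
    then show "\<exists>z. z ^ 2 = y ^ 2 * b" by blast
  qed
  then show ?thesis using y unfolding qchar_def by simp
qed

lemma qchar_mult:
  assumes two: "(2::'a::{finite,field}) \<noteq> 0"
  shows "qchar (a * b :: 'a) = qchar a * qchar b"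
proof -
  consider "a = 0 \<or> b = 0" | "a \<noteq> 0" "b \<noteq> 0" "\<exists>y. y ^ 2 = a" | "a \<noteq> 0" "b \<noteq> 0" "\<exists>y. y ^ 2 = b"
    | "a \<noteq> 0" "b \<noteq> 0" "\<not> (\<exists>y. y ^ 2 = a)" "\<not> (\<exists>y. y ^ 2 = b)" by blast
  then show ?thesis
  proof cases
    case 1 then show ?thesis by (auto simp: qchar_def)
  next
    case 2
    then obtain y where y: "y ^ 2 = a" by blast
    then have "y \<noteq> 0" using 2 by auto
    then show ?thesis using qchar_sq[of y b] y 2 by (auto simp: qchar_def)
  next
    case 3
    then obtain y where y: "y ^ 2 = b" by blast
    then have "y \<noteq> 0" using 3 by auto
    then show ?thesis using qchar_sq[of y a] y 3 by (auto simp: qchar_def mult.commute)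
  next
    case 4
    define S where "S = {t::'a. t \<noteq> 0 \<and> (\<exists>y. y ^ 2 = t)}"
    define N where "N = {t::'a. t \<noteq> 0 \<and> \<not> (\<exists>y. y ^ 2 = t)}"
    have q: "qchar t = of_bool (t \<in> S) - of_bool (t \<in> N)" for t
      unfolding qchar_def S_def N_def by auto
    have "0 = (\<Sum>t\<in>(UNIV::'a set). qchar t)" using sum_qchar[OF two] by simp
    also have "\<dots> = int (card S) - int (card N)"
      unfolding q by (simp add: sum_subtractf)
    finally have cSN: "card S = card N" by simp
    have sub: "(\<lambda>s. a * s) ` S \<subseteq> N"
    proof
      fix x assume "x \<in> (\<lambda>s. a * s) ` S"
      then obtain s z where s: "x = a * s" "s \<noteq> 0" "z ^ 2 = s" unfolding S_def by auto
      have "x \<noteq> 0" using s 4 by auto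
      moreover have "\<not> (\<exists>y. y ^ 2 = x)"
      proof
        assume "\<exists>y. y ^ 2 = x"
        then obtain y where "y ^ 2 = a * s" using s by auto
        then have "(y / z) ^ 2 = a" using s by (auto simp: power_divide)
        then show False using 4 by blast
      qed
      ultimately show "x \<in> N" unfolding N_def by auto
    qed
    have "inj_on (\<lambda>s. a * s) S" using 4 by (auto intro: inj_onI)
    then have "card ((\<lambda>s. a * s) ` S) = card N" using cSN by (simp add: card_image)
    then have "(\<lambda>s. a * s) ` S = N" using sub by (intro card_subset_eq) auto
    moreover have "b \<in> N" using 4 unfolding N_def by auto
    ultimately obtain s z where s: "b = a * s" "z ^ 2 = s" unfolding S_def by auto
    then have "(a * z) ^ 2 = a * b" by (simp add: power_mult_distrib power2_eq_square)
    moreover have "a * b \<noteq> 0" using 4 by simp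
    ultimately have "qchar (a * b) = 1" unfolding qchar_def by auto
    moreover have "qchar a = -1" "qchar b = -1" using 4 unfolding qchar_def by auto
    ultimately show ?thesis by simp
  qed
qed

lemma qchar_inverse:
  assumes two: "(2::'a::{finite,field}) \<noteq> 0"
  shows "qchar (inverse a :: 'a) = qchar a"
proof (cases "a = 0")
  case True then show ?thesis by simp
next
  case False
  have "inverse a = (inverse a) ^ 2 * a" using False by (simp add: power2_eq_square)
  then show ?thesis using qchar_sq[of "inverse a" a] False by simp
qed

lemma qchar_sq_val: "a \<noteq> 0 \<Longrightarrow> qchar a * qchar a = 1"
  unfolding qchar_def by auto

definition gsum :: "'a::{finite,field} \<Rightarrow> complex" where
  "gsum a = (\<Sum>x\<in>UNIV. can_chi (a * x ^ 2))"

definition gconst :: "'a::{finite,field} itself \<Rightarrow> complex" where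
  "gconst t = (\<Sum>u\<in>(UNIV::'a set). can_chi u * of_int (qchar u))"

lemma gsum_eq:
  assumes two: "(2::'a::{finite,field}) \<noteq> 0" and a: "(a::'a) \<noteq> 0"
  shows "gsum a = of_int (qchar a) * gconst TYPE('a)"
proof -
  have "gsum a = (\<Sum>t\<in>UNIV. \<Sum>x\<in>{x. x \<in> UNIV \<and> x ^ 2 = t}. can_chi (a * x ^ 2))"
    unfolding gsum_def by (rule sum.group[symmetric]) auto
  also have "\<dots> = (\<Sum>t\<in>UNIV. can_chi (a * t) * of_nat (card {x::'a. x ^ 2 = t}))"
    by (rule sum.cong) (auto simp: mult.commute)
  also have "\<dots> = (\<Sum>t\<in>UNIV. can_chi (a * t) * (1 + of_int (qchar t)))"
  proof (rule sum.cong)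
    fix t :: 'a
    have "(of_nat (card {x::'a. x ^ 2 = t}) :: complex) = of_int (int (card {x::'a. x ^ 2 = t}))" by simp
    also have "\<dots> = 1 + of_int (qchar t)" using sq_card[OF two, of t] by simp
    finally show "can_chi (a * t) * of_nat (card {x::'a. x ^ 2 = t}) = can_chi (a * t) * (1 + of_int (qchar t))"
      by simp
  qed simp
  also have "\<dots> = (\<Sum>t\<in>UNIV. can_chi (a * t)) + (\<Sum>t\<in>UNIV. can_chi (a * t) * of_int (qchar t))"
    by (simp add: distrib_left sum.distrib)
  also have "(\<Sum>t\<in>UNIV. can_chi (a * t)) = 0" using sum_can_chi_mult[of a] a by simp
  also have "(\<Sum>t\<in>UNIV. can_chi (a * t) * of_int (qchar t)) = (\<Sum>u\<in>UNIV. can_chi u * of_int (qchar (u / a)))"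
    by (rule sum.reindex_bij_witness[where j="\<lambda>t. a * t" and i="\<lambda>u. u / a"]) (use a in auto)
  also have "\<dots> = (\<Sum>u::'a\<in>UNIV. of_int (qchar a) * (can_chi u * of_int (qchar u)))"
  proof (rule sum.cong)
    fix u :: 'a
    have "qchar (u / a) = qchar u * qchar a"
      by (simp add: divide_inverse qchar_mult[OF two] qchar_inverse[OF two])
    then show "can_chi u * of_int (qchar (u / a)) = of_int (qchar a) * (can_chi u * of_int (qchar u))"
      by simp
  qed simp
  finally show ?thesis unfolding gconst_def by (simp add: sum_distrib_left)
qed

lemma gconst_sq:
  assumes two: "(2::'a::{finite,field}) \<noteq> 0"
  shows "gconst TYPE('a) ^ 2 = of_int (qchar (-1::'a)) * of_nat CARD('a)"
proof -
  let ?e = "\<lambda>u::'a. (of_int (qchar u) :: complex)"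
  define F where "F s = (\<Sum>t\<in>UNIV. can_chi (s + t) * (?e s * ?e t))" for s :: 'a
  define H where "H s = (\<Sum>u\<in>UNIV. can_chi (s * (1 + u)) * ?e u)" for s :: 'a
  have sumq: "(\<Sum>u\<in>(UNIV::'a set). ?e u) = 0"
    using sum_qchar[OF two] by (metis of_int_0 of_int_sum)
  have FH: "F s = H s" for s
  proof (cases "s = 0")
    case True
    then show ?thesis unfolding F_def H_def using sumq by (simp add: qchar_def can_chi_0)
  next
    case False
    have "F s = (\<Sum>u\<in>UNIV. can_chi (s + s * u) * (?e s * ?e (s * u)))"
      unfolding F_def
      by (rule sum.reindex_bij_witness[where j="\<lambda>t. t / s" and i="\<lambda>u. s * u"]) (use False in auto)
    also have "\<dots> = H s" unfolding H_def
    proof (rule sum.cong)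
      fix u :: 'a
      have "qchar s * qchar (s * u) = qchar u"
        using qchar_mult[OF two, of s u] qchar_sq_val[OF False] by (simp add: mult.assoc[symmetric])
      then have "?e s * ?e (s * u) = ?e u" by (metis of_int_mult)
      then show "can_chi (s + s * u) * (?e s * ?e (s * u)) = can_chi (s * (1 + u)) * ?e u"
        by (simp add: distrib_left)
    qed simp
    finally show ?thesis .
  qed
  have "gconst TYPE('a) ^ 2 = (\<Sum>s\<in>UNIV. \<Sum>t\<in>UNIV. (can_chi s * ?e s) * (can_chi t * ?e t))"
    unfolding gconst_def power2_eq_square by (simp add: sum_product)
  also have "\<dots> = (\<Sum>s\<in>UNIV. F s)" unfolding F_def
    by (rule sum.cong[OF refl], rule sum.cong[OF refl]) (simp add: can_chi_add)
  also have "\<dots> = (\<Sum>s\<in>UNIV. H s)" using FH by simp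
  also have "\<dots> = (\<Sum>u\<in>UNIV. ?e u * (\<Sum>s\<in>UNIV. can_chi ((1 + u) * s)))"
    unfolding H_def by (subst sum.swap) (simp add: sum_distrib_left mult.commute)
  also have "\<dots> = (\<Sum>u\<in>UNIV. if u = -1 then ?e u * of_nat CARD('a) else 0)"
    by (rule sum.cong[OF refl]) (simp add: sum_can_chi_mult add_eq_0_iff)
  also have "\<dots> = ?e (-1) * of_nat CARD('a)" by (simp add: sum.delta)
  finally show ?thesis .
qed

lemma gsum_pair:
  assumes two: "(2::'a::{finite,field}) \<noteq> 0" and a: "(a::'a) \<noteq> 0" and r: "r \<noteq> 0"
  shows "gsum a * gsum (- (r * a)) = of_int (qchar r) * of_nat CARD('a)"
proof -
  have ra: "- (r * a) \<noteq> 0" using a r by simp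
  have "gsum a * gsum (- (r * a)) = of_int (qchar a * qchar (- (r * a)) * qchar (-1::'a)) * of_nat CARD('a)"
    using gsum_eq[OF two a] gsum_eq[OF two ra] gconst_sq[OF two]
    by (simp add: power2_eq_square algebra_simps)
  also have "qchar a * qchar (- (r * a)) * qchar (-1::'a) = qchar (a * a * r)"
    by (simp add: qchar_mult[OF two, symmetric] algebra_simps)
  also have "qchar (a * a * r) = qchar r" using qchar_sq[OF a, of r] by (simp add: power2_eq_square)
  finally show ?thesis .
qed

lemma gsum_complete_square:
  assumes two: "(2::'a::{finite,field}) \<noteq> 0" and a: "(a::'a) \<noteq> 0"
  shows "(\<Sum>x\<in>UNIV. can_chi (a * x ^ 2 - m * x)) = can_chi (- (m ^ 2 / (4 * a))) * gsum a"
proof -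
  let ?c = "m / (2 * a)"
  have "(\<Sum>x\<in>UNIV. can_chi (a * x ^ 2 - m * x)) = (\<Sum>y\<in>UNIV. can_chi (a * (y + ?c) ^ 2 - m * (y + ?c)))"
    by (rule sum.reindex_bij_witness[where j="\<lambda>x. x - ?c" and i="\<lambda>y. y + ?c"]) auto
  also have "\<dots> = (\<Sum>y\<in>UNIV. can_chi (- (m ^ 2 / (4 * a))) * can_chi (a * y ^ 2))"
  proof (rule sum.cong[OF refl])
    fix y :: 'a
    have "a * (y + ?c) ^ 2 - m * (y + ?c) = - (m ^ 2 / (4 * a)) + a * y ^ 2"
    proof -
      have "(2::'a) * 2 \<noteq> 0" using no_zero_divisors[OF two two] .
      then have four: "(4::'a) * a \<noteq> 0" using a by simp
      have ta: "2 * a \<noteq> 0" using no_zero_divisors[OF two a] .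
      have "2 * a * ?c = (2 * a * m) / (2 * a)" by (rule times_divide_eq_right)
      also have "\<dots> = m" by (rule nonzero_mult_div_cancel_left[OF ta])
      finally have mc: "m = 2 * a * ?c" by (rule sym)
      have e4': "(2 * a * z) ^ 2 = (4 * a) * (a * z ^ 2)" for z by (simp add: power2_eq_square algebra_simps)
      have e4: "(2 * a * ?c) ^ 2 = (4 * a) * (a * ?c ^ 2)" by (rule e4')
      have sq: "(2 * a * ?c) ^ 2 / (4 * a) = a * ?c ^ 2"
        unfolding e4 by (rule nonzero_mult_div_cancel_left[OF four])
      have e5: "a * (y + z) ^ 2 - (2 * a * z) * (y + z) = - (a * z ^ 2) + a * y ^ 2" for z
        by (simp add: power2_eq_square algebra_simps)
      have "a * (y + ?c) ^ 2 - (2 * a * ?c) * (y + ?c) = - (a * ?c ^ 2) + a * y ^ 2"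
        by (rule e5)
      then have "a * (y + ?c) ^ 2 - (2 * a * ?c) * (y + ?c) = - ((2 * a * ?c) ^ 2 / (4 * a)) + a * y ^ 2"
        by (simp only: sq)
      then show ?thesis by (simp only: mc[symmetric])
    qed
    then show "can_chi (a * (y + ?c) ^ 2 - m * (y + ?c)) = can_chi (- (m ^ 2 / (4 * a))) * can_chi (a * y ^ 2)"
      by (simp only: can_chi_add)
  qed
  finally show ?thesis unfolding gsum_def by (simp add: sum_distrib_left)
qed


lemma fvecs_Suc:
  "fvecs (Suc n) = (\<lambda>(X, c). X(n := c)) ` (fvecs n \<times> (UNIV :: 'a::{finite,field} set))"
proof (rule Set.set_eqI, rule iffI)
  fix Y :: "nat \<Rightarrow> 'a" assume Y: "Y \<in> fvecs (Suc n)"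
  have "Y = (Y(n := 0))(n := Y n)" by simp
  moreover have "Y(n := 0) \<in> fvecs n" using Y unfolding fvecs_def by auto
  ultimately show "Y \<in> (\<lambda>(X, c). X(n := c)) ` (fvecs n \<times> UNIV)"
    by (intro image_eqI[of _ _ "(Y(n := 0), Y n)"]) auto
next
  fix Y :: "nat \<Rightarrow> 'a" assume "Y \<in> (\<lambda>(X, c). X(n := c)) ` (fvecs n \<times> UNIV)"
  then show "Y \<in> fvecs (Suc n)" unfolding fvecs_def by auto
qed

lemma fvecs_inj: "inj_on (\<lambda>(X, c). X(n := c)) (fvecs n \<times> (UNIV :: 'a::{finite,field} set))"
proof (rule inj_onI, clarify)
  fix X Y :: "nat \<Rightarrow> 'a" and c d
  assume X: "X \<in> fvecs n" and Y: "Y \<in> fvecs n" and eq: "X(n := c) = Y(n := d)"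
  have "c = d" using fun_cong[OF eq, of n] by simp
  moreover have "X i = Y i" for i
  proof (cases "i = n")
    case True then show ?thesis using X Y unfolding fvecs_def by auto
  next
    case False then show ?thesis using fun_cong[OF eq, of i] by simp
  qed
  ultimately show "X = Y \<and> c = d" by auto
qed

lemma finite_fvecs: "finite (fvecs n :: (nat \<Rightarrow> 'a::{finite,field}) set)"
proof (induction n)
  case 0
  have "fvecs 0 = {(\<lambda>_. 0) :: nat \<Rightarrow> 'a}" unfolding fvecs_def by auto
  then show ?case by simp
next
  case (Suc n) then show ?case by (simp add: fvecs_Suc)
qed

lemma prod_sum_fvecs:
  fixes f :: "nat \<Rightarrow> 'a::{finite,field} \<Rightarrow> complex"
  shows "(\<Sum>X\<in>fvecs n. \<Prod>i<n. f i (X i)) = (\<Prod>i<n. \<Sum>c\<in>UNIV. f i c)"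
proof (induction n)
  case 0
  have "fvecs 0 = {(\<lambda>_. 0) :: nat \<Rightarrow> 'a}" unfolding fvecs_def by auto
  then show ?case by simp
next
  case (Suc n)
  have "(\<Sum>X\<in>fvecs (Suc n). \<Prod>i<Suc n. f i (X i))
      = (\<Sum>Xc\<in>fvecs n \<times> UNIV. (\<Prod>i<n. f i (fst Xc i)) * f n (snd Xc))"
  proof (rule sum.reindex_cong[OF fvecs_inj fvecs_Suc])
    fix Xc :: "(nat \<Rightarrow> 'a) \<times> 'a"
    obtain X c where Xc: "Xc = (X, c)" by (cases Xc)
    have "(\<Prod>i<Suc n. f i ((X(n := c)) i)) = (\<Prod>i<n. f i ((X(n := c)) i)) * f n c"
      by simp
    also have "(\<Prod>i<n. f i ((X(n := c)) i)) = (\<Prod>i<n. f i (X i))"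
      by (rule prod.cong) auto
    finally show "(\<Prod>i<Suc n. f i (((\<lambda>(X, c). X(n := c)) Xc) i)) = (\<Prod>i<n. f i (fst Xc i)) * f n (snd Xc)"
      unfolding Xc by simp
  qed
  also have "\<dots> = (\<Sum>X\<in>fvecs n. \<Sum>c\<in>UNIV. (\<Prod>i<n. f i (X i)) * f n c)"
    by (simp add: sum.cartesian_product split_beta)
  also have "\<dots> = (\<Sum>X\<in>fvecs n. \<Prod>i<n. f i (X i)) * (\<Sum>c\<in>UNIV. f n c)"
    by (simp add: sum_product)
  finally show ?case using Suc by simp
qed

lemma sum_split_add: "(\<Sum>i<(m::nat) + k. g i) = (\<Sum>i<m. g i) + (\<Sum>i<k. g (m + i))"
  by (induction k) (simp_all add: add.assoc)

lemma prod_split_add: "(\<Prod>i<(m::nat) + k. g i) = (\<Prod>i<m. g i) * (\<Prod>i<k. g (m + i))"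
  by (induction k) (simp_all add: mult.assoc)

definition acoef :: "nat \<Rightarrow> 'a::{finite,field} \<Rightarrow> nat \<Rightarrow> 'a" where
  "acoef d e i = (if i < d - 1 then (-1) ^ i else if even d then - e else e)"

definition ccoef :: "nat \<Rightarrow> 'a::{finite,field} \<Rightarrow> 'a \<Rightarrow> nat \<Rightarrow> 'a" where
  "ccoef d e r i = (if i < d then acoef d e i else - (r * acoef d e (i - d)))"

lemma acoef_nz: "e \<noteq> 0 \<Longrightarrow> acoef d e i \<noteq> 0"
  unfolding acoef_def by auto

lemma acoef_inv: "acoef d (inverse e) i = inverse (acoef d e i)"
proof -
  have "inverse ((-1::'a) ^ i) = (-1) ^ i"
    by (simp add: power_inverse[symmetric])
  then show ?thesis unfolding acoef_def by (simp add: inverse_minus_eq)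
qed

lemma qform_sum:
  assumes "d > 0"
  shows "qform d e x = (\<Sum>i<d. acoef d e i * x i ^ 2)"
proof -
  obtain k where k: "d = Suc k" using assms by (cases d) auto
  have "(\<Sum>i<d. acoef d e i * x i ^ 2) = (\<Sum>i<k. acoef d e i * x i ^ 2) + acoef d e k * x k ^ 2"
    unfolding k by simp
  also have "(\<Sum>i<k. acoef d e i * x i ^ 2) = (\<Sum>i<d - 1. (-1) ^ i * x i ^ 2)"
    using k by (intro sum.cong) (auto simp: acoef_def)
  also have "acoef d e k = (if even d then - e else e)" using k by (simp add: acoef_def)
  finally show ?thesis unfolding qform_def using k by simp
qed

lemma qform_fst: "d > 0 \<Longrightarrow> qform d e (fst_half d X) = (\<Sum>i<d. acoef d e i * X i ^ 2)"
  by (simp add: qform_sum fst_half_def)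

lemma qform_snd: "d > 0 \<Longrightarrow> qform d e (snd_half d X) = (\<Sum>i<d. acoef d e i * X (d + i) ^ 2)"
  by (simp add: qform_sum snd_half_def)

lemma F_sum:
  assumes "d > 0"
  shows "qform d e (fst_half d X) - r * qform d e (snd_half d X) = (\<Sum>i<2 * d. ccoef d e r i * X i ^ 2)"
proof -
  have "(\<Sum>i<2 * d. ccoef d e r i * X i ^ 2) = (\<Sum>i<d + d. ccoef d e r i * X i ^ 2)" by (simp add: mult_2)
  also have "\<dots> = (\<Sum>i<d. ccoef d e r i * X i ^ 2) + (\<Sum>i<d. ccoef d e r (d + i) * X (d + i) ^ 2)"
    by (rule sum_split_add)
  also have "(\<Sum>i<d. ccoef d e r i * X i ^ 2) = (\<Sum>i<d. acoef d e i * X i ^ 2)"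
    by (rule sum.cong) (auto simp: ccoef_def)
  also have "(\<Sum>i<d. ccoef d e r (d + i) * X (d + i) ^ 2) = - (r * (\<Sum>i<d. acoef d e i * X (d + i) ^ 2))"
    by (simp add: ccoef_def sum_distrib_left sum_negf mult.assoc)
  finally show ?thesis using assms by (simp add: qform_fst qform_snd)
qed

lemma Fdual_sum:
  assumes "d > 0"
  shows "qform d (inverse e) (fst_half d M) - inverse r * qform d (inverse e) (snd_half d M)
    = (\<Sum>i<d. inverse (acoef d e i) * M i ^ 2 - inverse r * (inverse (acoef d e i) * M (d + i) ^ 2))"
  using assms by (simp add: qform_fst qform_snd acoef_inv sum_subtractf sum_distrib_left)

lemma fdot_split: "fdot n M X = (\<Sum>i<n. M i * X i)"
  by (simp add: fdot_def)

lemma sum_nonzero_chi: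
  "(\<Sum>s\<in>UNIV - {0::'a::{finite,field}}. can_chi (- (T / (4 * s)))) = (if T = 0 then of_nat CARD('a) else 0) - 1"
  if two: "(2::'a) \<noteq> 0"
proof -
  have f4: "(4::'a) \<noteq> 0"
  proof -
    have "(2::'a) * 2 \<noteq> 0" using no_zero_divisors[OF two two] .
    then show ?thesis by simp
  qed
  have "(\<Sum>s\<in>UNIV - {0::'a}. can_chi (- (T / (4 * s)))) = (\<Sum>u\<in>UNIV - {0::'a}. can_chi (T * u))"
  proof (rule sum.reindex_bij_witness[where j="\<lambda>s. - inverse (4 * s)" and i="\<lambda>u. - inverse (4 * u)"])
    fix s :: 'a assume "s \<in> UNIV - {0}"
    then show "- inverse (4 * - inverse (4 * s)) = s" using f4 by (simp add: inverse_mult_distrib)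
  next
    fix s :: 'a assume "s \<in> UNIV - {0}"
    then show "- inverse (4 * s) \<in> UNIV - {0}" using f4 by simp
  next
    fix s :: 'a assume "s \<in> UNIV - {0}"
    then show "- inverse (4 * - inverse (4 * s)) = s" using f4 by (simp add: inverse_mult_distrib)
  next
    fix s :: 'a assume "s \<in> UNIV - {0}"
    then show "- inverse (4 * s) \<in> UNIV - {0}" using f4 by simp
  next
    fix s :: 'a assume "s \<in> UNIV - {0}"
    show "can_chi (T * - inverse (4 * s)) = can_chi (- (T / (4 * s)))"
      by (simp only: divide_inverse mult_minus_right)
  qed
  also have "\<dots> = (\<Sum>u\<in>UNIV. can_chi (T * u)) - can_chi (T * 0)"
    by (simp add: sum_diff1)
  finally show ?thesis by (simp add: sum_can_chi_mult can_chi_0)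
qed


lemma final_algebra:
  fixes Q B V e :: complex
  assumes "Q \<noteq> 0"
  shows "(1 / Q ^ (2 * d)) * ((1 / Q) * (B * Q ^ (2 * d) + (e * Q) ^ d * (V * Q - 1)))
       = B / Q + e ^ d * V / Q ^ d - e ^ d / Q ^ (d + 1)"
proof -
  have q2: "Q ^ (2 * d) = Q ^ d * Q ^ d" by (simp add: mult_2 power_add)
  show ?thesis using assms unfolding q2
    by (simp add: field_simps power_mult_distrib power_add)
qed

lemma pair_exp_identity:
  fixes a s r M N :: "'a::field"
  shows "- (M / (4 * (s * a))) + - (N / (4 * (s * - (r * a))))
       = - ((inverse a * M - inverse r * (inverse a * N)) / (4 * s))"
  unfolding divide_inverse inverse_mult_distrib inverse_minus_eq by (simp add: algebra_simps)

lemma ccoef_nz: "e \<noteq> 0 \<Longrightarrow> r \<noteq> 0 \<Longrightarrow> ccoef d e r i \<noteq> 0"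
  unfolding ccoef_def using acoef_nz[of e d] by auto

lemma qchar_pow_even: "(r::'a::{finite,field}) \<noteq> 0 \<Longrightarrow> even d \<Longrightarrow> (of_int (qchar r) :: complex) ^ d = 1"
proof -
  assume r: "r \<noteq> 0" and "even d"
  then obtain k where k: "d = 2 * k" by blast
  have "(of_int (qchar r) :: complex) ^ 2 = 1"
    using qchar_sq_val[OF r] by (metis of_int_1 of_int_mult power2_eq_square)
  then show ?thesis unfolding k by (simp add: power_mult)
qed

lemma qchar_pow_odd: "(r::'a::{finite,field}) \<noteq> 0 \<Longrightarrow> odd d \<Longrightarrow> (of_int (qchar r) :: complex) ^ d = of_int (qchar r)"
proof -
  assume r: "r \<noteq> 0" and "odd d"
  then obtain k where k: "d = 2 * k + 1" using oddE by blast
  have "(of_int (qchar r) :: complex) ^ 2 = 1"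
    using qchar_sq_val[OF r] by (metis of_int_1 of_int_mult power2_eq_square)
  then show ?thesis unfolding k by (simp add: power_mult)
qed

theorem main_formula:
  fixes d :: nat and r \<epsilon> :: "'a::{finite,field}" and M :: "nat \<Rightarrow> 'a"
  assumes q_odd: "odd CARD('a)" and d0: "d > 0" and r_nz: "r \<noteq> 0" and eps_nz: "\<epsilon> \<noteq> 0"
    and M_in: "M \<in> fvecs (2 * d)"
  shows "ffourier (2 * d) (ind (VQ d \<epsilon> r)) M =
     (1 / of_nat CARD('a) ^ (2 * d)) * ((1 / of_nat CARD('a)) *
       (ind {\<lambda>_. 0} M * of_nat CARD('a) ^ (2 * d)
        + (of_int (qchar r) * of_nat CARD('a)) ^ d * (ind (VQdual d \<epsilon> r) M * of_nat CARD('a) - 1)))"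
proof -
  let ?Q = "(of_nat CARD('a) :: complex)"
  have two: "(2::'a) \<noteq> 0" by (rule ff_two_nz[OF q_odd])
  have Q0: "?Q \<noteq> 0" by simp
  define c where "c = ccoef d \<epsilon> r"
  have c_nz: "c i \<noteq> 0" for i unfolding c_def using ccoef_nz[OF eps_nz r_nz] .
  define T where "T = qform d (inverse \<epsilon>) (fst_half d M) - inverse r * qform d (inverse \<epsilon>) (snd_half d M)"
  define F where "F X = (\<Sum>i<2 * d. c i * X i ^ 2)" for X :: "nat \<Rightarrow> 'a"
  define P where "P s = (\<Prod>i<2 * d. \<Sum>x\<in>UNIV. can_chi (s * c i * x ^ 2 - M i * x))" for s :: 'a
  define \<eta> where "\<eta> = (of_int (qchar r) :: complex)"
  have indV: "ind (VQ d \<epsilon> r) X = (1 / ?Q) * (\<Sum>s\<in>UNIV. can_chi (F X * s))" if X: "X \<in> fvecs (2 * d)" for X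
  proof -
    have "X \<in> VQ d \<epsilon> r \<longleftrightarrow> F X = 0"
      using X unfolding VQ_def F_def c_def by (simp add: F_sum[OF d0])
    then show ?thesis unfolding ind_def using sum_can_chi_mult[of "F X"] Q0 by simp
  qed
  have stepB: "(\<Sum>X\<in>fvecs (2 * d). can_chi (- fdot (2 * d) M X) * ind (VQ d \<epsilon> r) X)
      = (1 / ?Q) * (\<Sum>s\<in>UNIV. P s)"
  proof -
    have "(\<Sum>X\<in>fvecs (2 * d). can_chi (- fdot (2 * d) M X) * ind (VQ d \<epsilon> r) X)
        = (\<Sum>X\<in>fvecs (2 * d). (1 / ?Q) * (\<Sum>s\<in>UNIV. can_chi (F X * s + - fdot (2 * d) M X)))"
    proof (rule sum.cong[OF refl])
      fix X :: "nat \<Rightarrow> 'a" assume "X \<in> fvecs (2 * d)"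
      then show "can_chi (- fdot (2 * d) M X) * ind (VQ d \<epsilon> r) X
          = (1 / ?Q) * (\<Sum>s\<in>UNIV. can_chi (F X * s + - fdot (2 * d) M X))"
      proof -
        assume X: "X \<in> fvecs (2 * d)"
        have "(\<Sum>s\<in>UNIV. can_chi (F X * s + - fdot (2 * d) M X))
            = can_chi (- fdot (2 * d) M X) * (\<Sum>s\<in>UNIV. can_chi (F X * s))"
          by (simp only: can_chi_add) (simp add: sum_distrib_left sum_distrib_right mult.commute)
        then show ?thesis unfolding indV[OF X] by (metis mult.left_commute)
      qed
    qed
    also have "\<dots> = (1 / ?Q) * (\<Sum>X\<in>fvecs (2 * d). \<Sum>s\<in>UNIV. can_chi (F X * s + - fdot (2 * d) M X))"
      by (rule sum_distrib_left[symmetric])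
    also have "\<dots> = (1 / ?Q) * (\<Sum>s\<in>UNIV. \<Sum>X\<in>fvecs (2 * d). can_chi (F X * s + - fdot (2 * d) M X))"
      by (subst sum.swap) (rule refl)
    also have "(\<Sum>s\<in>UNIV. \<Sum>X\<in>fvecs (2 * d). can_chi (F X * s + - fdot (2 * d) M X)) = (\<Sum>s\<in>UNIV. P s)"
    proof (rule sum.cong[OF refl])
      fix s :: 'a
      have "(\<Sum>X\<in>fvecs (2 * d). can_chi (F X * s + - fdot (2 * d) M X))
          = (\<Sum>X\<in>fvecs (2 * d). \<Prod>i<2 * d. can_chi (s * c i * X i ^ 2 - M i * X i))"
      proof (rule sum.cong[OF refl])
        fix X :: "nat \<Rightarrow> 'a"
        have "F X * s + - fdot (2 * d) M X = (\<Sum>i<2 * d. s * c i * X i ^ 2 - M i * X i)"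
          unfolding F_def fdot_def by (simp add: sum_distrib_left sum_distrib_right sum_subtractf algebra_simps)
        then show "can_chi (F X * s + - fdot (2 * d) M X) = (\<Prod>i<2 * d. can_chi (s * c i * X i ^ 2 - M i * X i))"
          by (simp add: can_chi_sum)
      qed
      also have "\<dots> = P s" unfolding P_def by (rule prod_sum_fvecs)
      finally show "(\<Sum>X\<in>fvecs (2 * d). can_chi (F X * s + - fdot (2 * d) M X)) = P s" .
    qed
    finally show ?thesis .
  qed
  have P0: "P 0 = ind {\<lambda>_. 0} M * ?Q ^ (2 * d)"
  proof -
    have "P 0 = (\<Prod>i<2 * d. if M i = 0 then ?Q else 0)"
      unfolding P_def
    proof (rule prod.cong[OF refl])
      fix i
      have "(\<Sum>x\<in>UNIV. can_chi (0 * c i * x ^ 2 - M i * x)) = (\<Sum>x\<in>UNIV. can_chi ((- M i) * x))"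
        by simp
      also have "\<dots> = (if M i = 0 then ?Q else 0)" using sum_can_chi_mult[of "- M i"] by (simp add: can_chi_0)
      finally show "(\<Sum>x\<in>UNIV. can_chi (0 * c i * x ^ 2 - M i * x)) = (if M i = 0 then ?Q else 0)" .
    qed
    also have "\<dots> = ind {\<lambda>_. 0} M * ?Q ^ (2 * d)"
    proof (cases "M = (\<lambda>_. 0)")
      case True
      then show ?thesis by (simp add: ind_def)
    next
      case False
      then obtain j where j: "M j \<noteq> 0" by auto
      then have "j < 2 * d" using M_in unfolding fvecs_def by (auto simp: not_le[symmetric])
      then have "(\<Prod>i<2 * d. if M i = 0 then ?Q else 0) = 0"
        using j by (intro prod_zero) auto
      then show ?thesis using False by (simp add: ind_def)
    qed
    finally show ?thesis .
  qed
  have PS: "P s = (\<eta> * ?Q) ^ d * can_chi (- (T / (4 * s)))" if s: "s \<noteq> 0" for s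
  proof -
    define \<phi> where "\<phi> i = (\<Sum>x\<in>UNIV. can_chi (s * c i * x ^ 2 - M i * x))" for i
    have phi: "\<phi> i = can_chi (- (M i ^ 2 / (4 * (s * c i)))) * gsum (s * c i)" for i
      unfolding \<phi>_def by (rule gsum_complete_square[OF two]) (use s c_nz in simp)
    define t where "t i = inverse (acoef d \<epsilon> i) * M i ^ 2 - inverse r * (inverse (acoef d \<epsilon> i) * M (d + i) ^ 2)" for i
    have pair: "\<phi> i * \<phi> (d + i) = (\<eta> * ?Q) * can_chi (- (t i / (4 * s)))" if i: "i < d" for i
    proof -
      let ?a = "acoef d \<epsilon> i"
      have ci: "c i = ?a" "c (d + i) = - (r * ?a)" unfolding c_def ccoef_def using i by auto
      have a0: "s * ?a \<noteq> 0" using s acoef_nz[OF eps_nz] by simp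
      have g: "gsum (s * ?a) * gsum (s * - (r * ?a)) = \<eta> * ?Q"
        using gsum_pair[OF two a0 r_nz] unfolding \<eta>_def by (simp add: algebra_simps)
      have "\<phi> i * \<phi> (d + i) = (can_chi (- (M i ^ 2 / (4 * (s * ?a)))) * can_chi (- (M (d + i) ^ 2 / (4 * (s * - (r * ?a))))))
          * (gsum (s * ?a) * gsum (s * - (r * ?a)))"
        unfolding phi ci by (simp add: algebra_simps)
      also have "can_chi (- (M i ^ 2 / (4 * (s * ?a)))) * can_chi (- (M (d + i) ^ 2 / (4 * (s * - (r * ?a)))))
          = can_chi (- (t i / (4 * s)))"
        unfolding t_def can_chi_add[symmetric] pair_exp_identity ..
      finally show ?thesis using g by (simp add: mult.commute)
    qed
    have "P s = (\<Prod>i<d + d. \<phi> i)" unfolding P_def \<phi>_def by (simp add: mult_2)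
    also have "\<dots> = (\<Prod>i<d. \<phi> i) * (\<Prod>i<d. \<phi> (d + i))" by (rule prod_split_add)
    also have "\<dots> = (\<Prod>i<d. \<phi> i * \<phi> (d + i))" by (simp add: prod.distrib)
    also have "\<dots> = (\<Prod>i<d. (\<eta> * ?Q) * can_chi (- (t i / (4 * s))))"
      by (rule prod.cong) (simp_all add: pair)
    also have "\<dots> = (\<eta> * ?Q) ^ d * can_chi (\<Sum>i<d. - (t i / (4 * s)))"
      by (simp add: prod.distrib can_chi_sum)
    also have "(\<Sum>i<d. - (t i / (4 * s))) = - (T / (4 * s))"
      unfolding T_def Fdual_sum[OF d0] t_def by (simp add: sum_negf sum_divide_distrib)
    finally show ?thesis .
  qed
  have "(\<Sum>s\<in>UNIV. P s) = P 0 + (\<Sum>s\<in>UNIV - {0}. P s)"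
    by (simp add: sum.remove)
  also have "(\<Sum>s\<in>UNIV - {0}. P s) = (\<eta> * ?Q) ^ d * (\<Sum>s\<in>UNIV - {0::'a}. can_chi (- (T / (4 * s))))"
    by (simp add: PS sum_distrib_left)
  also have "(\<Sum>s\<in>UNIV - {0::'a}. can_chi (- (T / (4 * s)))) = ind (VQdual d \<epsilon> r) M * ?Q - 1"
    using sum_nonzero_chi[OF two, of T] M_in unfolding T_def ind_def VQdual_def by simp
  finally have E: "(\<Sum>s\<in>UNIV. P s) = ind {\<lambda>_. 0} M * ?Q ^ (2 * d) + (\<eta> * ?Q) ^ d * (ind (VQdual d \<epsilon> r) M * ?Q - 1)"
    using P0 by simp
  show ?thesis
    unfolding ffourier_def stepB E \<eta>_def by simp
qed


theorem proposition5p2: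
  fixes A :: "'a::{finite,field} mat" and d :: nat and r \<epsilon> :: 'a and M :: "nat \<Rightarrow> 'a"
  assumes q_odd: "odd CARD('a)"
    and d_ge: "d \<ge> 2"
    and r_nz: "r \<noteq> 0"
    and A_dim: "A \<in> carrier_mat d d"
    and A_sym: "transpose_mat A = A"
    and A_nonsing: "det A \<noteq> 0"
    and eps_nz: "\<epsilon> \<noteq> 0"
    and eps_even: "even d \<Longrightarrow> qchar ((-1) ^ (d div 2) * \<epsilon>) = qchar (det A)"
    and eps_odd: "odd d \<Longrightarrow> qchar ((-1) ^ ((d - 1) div 2) * \<epsilon>) = qchar (det A)"
    and M_in: "M \<in> fvecs (2 * d)"
  shows "(even d \<longrightarrow>
            ffourier (2 * d) (ind (VQ d \<epsilon> r)) M =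
              ind {\<lambda>_. 0} M / of_nat CARD('a)
              + ind (VQdual d \<epsilon> r) M / of_nat CARD('a) ^ d
              - 1 / of_nat CARD('a) ^ (d + 1))
       \<and> (odd d \<longrightarrow>
            ffourier (2 * d) (ind (VQ d \<epsilon> r)) M =
              ind {\<lambda>_. 0} M / of_nat CARD('a)
              + of_int (qchar r) * ind (VQdual d \<epsilon> r) M / of_nat CARD('a) ^ d
              - of_int (qchar r) / of_nat CARD('a) ^ (d + 1))"
  proof -
  have d0: "d > 0" using d_ge by simp
  let ?Q = "(of_nat CARD('a) :: complex)"
  have Q0: "?Q \<noteq> 0" by simp
  have mf: "ffourier (2 * d) (ind (VQ d \<epsilon> r)) M =
      ind {\<lambda>_. 0} M / ?Q + (of_int (qchar r)) ^ d * ind (VQdual d \<epsilon> r) M / ?Q ^ d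
      - (of_int (qchar r)) ^ d / ?Q ^ (d + 1)"
    unfolding main_formula[OF q_odd d0 r_nz eps_nz M_in] by (rule final_algebra[OF Q0])
  show ?thesis
  proof (intro conjI impI)
    assume "even d"
    then show "ffourier (2 * d) (ind (VQ d \<epsilon> r)) M =
              ind {\<lambda>_. 0} M / of_nat CARD('a)
              + ind (VQdual d \<epsilon> r) M / of_nat CARD('a) ^ d
              - 1 / of_nat CARD('a) ^ (d + 1)"
      using mf qchar_pow_even[OF r_nz] by simp
  next
    assume "odd d"
    then show "ffourier (2 * d) (ind (VQ d \<epsilon> r)) M =
              ind {\<lambda>_. 0} M / of_nat CARD('a)
              + of_int (qchar r) * ind (VQdual d \<epsilon> r) M / of_nat CARD('a) ^ d
              - of_int (qchar r) / of_nat CARD('a) ^ (d + 1)"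
      using mf qchar_pow_odd[OF r_nz] by simp
  qed
qed

end
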